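(* Let $n\in\mathbb{N}$ and let $\Delta:M_n\to M_n$ be a (not necessarily linear) weak-2-local derivation on $M_n=M_n(\mathbb{C})$ which is symmetric, i.e. $\Delta(a^* )^*=\Delta(a)$ for all $a\in M_n$. Then $\Delta$ is linear and a derivation.
   Context: A derivation on a C$^*$-algebra $A$ is a linear map $D:A\to A$ with $D(ab)=D(a)b+aD(b)$. A (not necessarily linear) map $\Delta:A\to A$ is a weak-2-local derivation if for every $a,b\in A$ and every $\phi\in A^*$ there exists a derivation $D_{a,b,\phi}:A\to A$ such that $\phi\Delta(a)=\phi D_{a,b,\phi}(a)$ and $\phi\Delta(b)=\phi D_{a,b,\phi}(b)$. *)

theory Defs
  imports "HOL-Analysis.Analysis"
begin

text \<open>M_n(C) is modelled as complex^'n^'n with 'n a finite index type (n = CARD('n)).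
  Product is matrix multiplication (**), the involution is the conjugate transpose.\<close>

definition cmat_adj :: "complex^'n^'n \<Rightarrow> complex^'n^'n" where
  "cmat_adj A = (\<chi> i j. cnj (A $ j $ i))"

definition cmat_scale :: "complex \<Rightarrow> complex^'n^'n \<Rightarrow> complex^'n^'n" where
  "cmat_scale c A = (\<chi> i j. c * A $ i $ j)"

definition clinear_op :: "(complex^'n^'n \<Rightarrow> complex^'n^'n) \<Rightarrow> bool" where
  "clinear_op T \<longleftrightarrow> (\<forall>a b. T (a + b) = T a + T b) \<and> (\<forall>c a. T (cmat_scale c a) = cmat_scale c (T a))"

text \<open>Complex-linear functionals on M_n (the dual space; all are bounded in finite dimension).\<close>
definition clinear_functional :: "(complex^'n^'n \<Rightarrow> complex) \<Rightarrow> bool" where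
  "clinear_functional \<phi> \<longleftrightarrow> (\<forall>a b. \<phi> (a + b) = \<phi> a + \<phi> b) \<and> (\<forall>c a. \<phi> (cmat_scale c a) = c * \<phi> a)"

definition is_derivation :: "(complex^'n^'n \<Rightarrow> complex^'n^'n) \<Rightarrow> bool" where
  "is_derivation D \<longleftrightarrow> clinear_op D \<and> (\<forall>a b. D (a ** b) = D a ** b + a ** D b)"

definition weak_2_local_derivation :: "(complex^'n^'n \<Rightarrow> complex^'n^'n) \<Rightarrow> bool" where
  "weak_2_local_derivation \<Delta> \<longleftrightarrow>
     (\<forall>a b \<phi>. clinear_functional \<phi> \<longrightarrow>
        (\<exists>D. is_derivation D \<and> \<phi> (\<Delta> a) = \<phi> (D a) \<and> \<phi> (\<Delta> b) = \<phi> (D b)))"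

end

theory Submission
  imports Defs
begin


definition E :: "'n \<Rightarrow> 'n \<Rightarrow> complex^'n^'n" where
  "E i j = (\<chi> p q. if p = i \<and> q = j then 1 else 0)"

lemma E_nth[simp]: "E i j $ p $ q = (if p = i then (if q = j then 1 else 0) else 0)"
  by (simp add: E_def)

lemma if10_mult: "(if c then 1 else 0) * (x::complex) = (if c then x else 0)"
  "x * (if c then 1 else 0) = (if c then x else 0)"
  "(if c then y else 0) * (x::complex) = (if c then y * x else 0)"
  "x * (if c then y else 0) = (if c then x * y else 0)"
  by simp_all

lemma E_left_nth: "(E i j ** M) $ p $ q = (if p = i then M $ j $ q else 0)"
  by (simp add: matrix_matrix_mult_def if10_mult sum.delta)

lemma E_right_nth: "(M ** E i j) $ p $ q = (if q = j then M $ p $ i else 0)"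
  by (simp add: matrix_matrix_mult_def if10_mult sum.delta')

lemma E_mult: "E i j ** E k l = (if j = k then E i l else 0)"
  by (simp add: vec_eq_iff E_left_nth)

lemma trace_E_mult: "trace (E k l ** M) = M $ l $ k"
  by (simp add: trace_def E_left_nth sum.delta')

lemma cmat_scale_nth[simp]: "cmat_scale c A $ i $ j = c * A $ i $ j"
  by (simp add: cmat_scale_def)

lemma decomp_row: "(\<Sum>j\<in>UNIV. (c (j::'n::finite)::complex) * (if p = i then (if q = j then 1 else 0) else 0)) = (if p = i then c q else 0)"
  by (cases "p = i") (simp_all add: if10_mult(2) sum.delta sum.delta')

lemma matrix_decomp: "(A::complex^'n^'n) = (\<Sum>i\<in>UNIV. \<Sum>j\<in>UNIV. cmat_scale (A$i$j) (E i j))"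
  by (simp add: vec_eq_iff sum_component decomp_row sum.delta)

lemma sum_E_diag: "(\<Sum>k\<in>UNIV. E k k) = (mat 1 :: complex^'n^'n)"
  by (simp add: vec_eq_iff sum_component mat_def sum.delta sum.delta')

lemma mult_if_right: "(A::complex^'n^'n) ** (if c then B else 0) = (if c then A ** B else 0)"
  by simp
lemma mult_if_left: "(if c then B else 0) ** (A::complex^'n^'n) = (if c then B ** A else 0)"
  by simp

lemma trace_scale: "trace (cmat_scale c A) = c * trace A"
  by (simp add: trace_def sum_distrib_left)

lemma mult_scale_left: "cmat_scale c A ** B = cmat_scale c (A ** B)"
  by (simp add: vec_eq_iff matrix_matrix_mult_def sum_distrib_left mult.assoc)

lemma mult_scale_right: "A ** cmat_scale c B = cmat_scale c (A ** B)"
  by (simp add: vec_eq_iff matrix_matrix_mult_def sum_distrib_left mult_ac)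

lemma matrix_add_rdistrib': "(B + C) ** (A::complex^'n^'n) = B ** A + C ** A"
  by (simp add: vec_eq_iff matrix_matrix_mult_def sum.distrib distrib_right)

lemma matrix_diff_rdistrib: "(B - C) ** (A::complex^'n^'n) = B ** A - C ** A"
  by (simp add: vec_eq_iff matrix_matrix_mult_def sum_subtractf left_diff_distrib)

lemma matrix_diff_ldistrib: "(A::complex^'n^'n) ** (B - C) = A ** B - A ** C"
  by (simp add: vec_eq_iff matrix_matrix_mult_def sum_subtractf right_diff_distrib)

lemma matrix_neg_left: "(- B) ** (A::complex^'n^'n) = - (B ** A)"
  by (simp add: vec_eq_iff matrix_matrix_mult_def sum_negf)

lemma clinear_op_zero: "clinear_op T \<Longrightarrow> T 0 = 0"
  unfolding clinear_op_def by (metis add_cancel_right_right add_0)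

lemma clinear_op_diff: "clinear_op T \<Longrightarrow> T (a - b) = T a - T b"
  unfolding clinear_op_def by (metis add_diff_cancel diff_add_cancel eq_diff_eq)

lemma clinear_op_sum: assumes "clinear_op T" "finite S" shows "T (sum f S) = (\<Sum>x\<in>S. T (f x))"
  using assms(2) by (induction S rule: finite_induct) (auto simp: clinear_op_zero[OF assms(1)] assms(1)[unfolded clinear_op_def])

lemma cmat_scale_diff: "cmat_scale c (A - B) = cmat_scale c A - cmat_scale c B"
  by (simp add: vec_eq_iff right_diff_distrib)

lemma cmat_scale_sum: "cmat_scale c (sum f S) = (\<Sum>x\<in>S. cmat_scale c (f x))"
  by (induction S rule: infinite_finite_induct) (auto simp: vec_eq_iff distrib_left sum_component cmat_scale_def)

lemma sum_mult_right: "(sum f S) ** (A::complex^'n^'n) = (\<Sum>x\<in>S. f x ** A)"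
  by (induction S rule: infinite_finite_induct) (auto simp: matrix_add_rdistrib')

lemma sum_mult_left: "(A::complex^'n^'n) ** (sum f S) = (\<Sum>x\<in>S. A ** f x)"
  by (induction S rule: infinite_finite_induct) (auto simp: matrix_add_ldistrib)

lemma clinear_linear_expand:
  assumes "clinear_op T"
  shows "T A = (\<Sum>i\<in>UNIV. \<Sum>j\<in>UNIV. cmat_scale (A$i$j) (T (E i j)))"
proof -
  have "T A = T (\<Sum>i\<in>UNIV. \<Sum>j\<in>UNIV. cmat_scale (A$i$j) (E i j))"
    by (subst matrix_decomp) simp
  also have "\<dots> = (\<Sum>i\<in>UNIV. \<Sum>j\<in>UNIV. cmat_scale (A$i$j) (T (E i j)))"
    using assms by (simp add: clinear_op_sum clinear_op_def)
  finally show ?thesis .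
qed

lemma deriv_inner:
  fixes D :: "complex^'n^'n \<Rightarrow> complex^'n^'n"
  assumes "is_derivation D"
  shows "\<exists>a. \<forall>z. D z = a ** z - z ** a"
proof -
  define z0 :: 'n where "z0 = undefined"
  have lin: "clinear_op D" and lei: "\<And>x y. D (x ** y) = D x ** y + x ** D y"
    using assms by (auto simp: is_derivation_def)
  define a where "a = (\<Sum>k\<in>UNIV. D (E k z0) ** E z0 k)"
  have unit: "D (E i j) = a ** E i j - E i j ** a" for i j
  proof -
    have 1: "a ** E i j = D (E i z0) ** E z0 j"
      unfolding a_def sum_mult_right
      by (simp add: matrix_mul_assoc[symmetric] E_mult mult_if_right)
    have 2: "E i j ** D (E k z0) = (if j = k then D (E i z0) else 0) - D (E i j) ** E k z0" for k
    proof -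
      have "D (E i j ** E k z0) = D (E i j) ** E k z0 + E i j ** D (E k z0)" by (rule lei)
      hence "E i j ** D (E k z0) = D (E i j ** E k z0) - D (E i j) ** E k z0" by (simp add: algebra_simps)
      thus ?thesis by (cases "j = k") (simp_all add: E_mult clinear_op_zero[OF lin])
    qed
    have "E i j ** a = (\<Sum>k\<in>UNIV. (E i j ** D (E k z0)) ** E z0 k)"
      unfolding a_def sum_mult_left by (simp add: matrix_mul_assoc)
    also have "\<dots> = (\<Sum>k\<in>UNIV. (if j = k then D (E i z0) ** E z0 k else 0) - D (E i j) ** (E k z0 ** E z0 k))"
      by (simp add: 2 matrix_diff_rdistrib mult_if_left matrix_mul_assoc)
    also have "\<dots> = D (E i z0) ** E z0 j - D (E i j) ** (\<Sum>k\<in>UNIV. E k k)"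
      by (simp add: sum_subtractf sum_mult_left E_mult)
    finally have "E i j ** a = D (E i z0) ** E z0 j - D (E i j)" by (simp add: sum_E_diag)
    with 1 show ?thesis by simp
  qed
  have "D z = a ** z - z ** a" for z
  proof -
    have "D z = (\<Sum>i\<in>UNIV. \<Sum>j\<in>UNIV. cmat_scale (z$i$j) (a ** E i j - E i j ** a))"
      by (subst clinear_linear_expand[OF lin]) (simp add: unit)
    also have "\<dots> = (\<Sum>i\<in>UNIV. \<Sum>j\<in>UNIV. a ** cmat_scale (z$i$j) (E i j)) - (\<Sum>i\<in>UNIV. \<Sum>j\<in>UNIV. cmat_scale (z$i$j) (E i j) ** a)"
      by (simp add: cmat_scale_diff mult_scale_left mult_scale_right sum_subtractf)
    also have "\<dots> = a ** z - z ** a"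
    proof -
      have "a ** z = a ** (\<Sum>i\<in>UNIV. \<Sum>j\<in>UNIV. cmat_scale (z$i$j) (E i j))"
        by (rule arg_cong[where f="\<lambda>m. a ** m"], rule matrix_decomp)
      moreover have "z ** a = (\<Sum>i\<in>UNIV. \<Sum>j\<in>UNIV. cmat_scale (z$i$j) (E i j)) ** a"
        by (rule arg_cong[where f="\<lambda>m. m ** a"], rule matrix_decomp)
      ultimately show ?thesis by (simp only: sum_mult_left sum_mult_right)
    qed
    finally show ?thesis .
  qed
  thus ?thesis by blast
qed




lemma matrix_neg_right: "(A::complex^'n^'n) ** (- B) = - (A ** B)"
  by (simp add: vec_eq_iff matrix_matrix_mult_def sum_negf)

lemma functional_trace: "clinear_functional (\<lambda>m. trace ((w::complex^'n^'n) ** m))"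
  unfolding clinear_functional_def
  by (simp add: matrix_add_ldistrib trace_add mult_scale_right trace_scale)

lemma functional_entry: "clinear_functional (\<lambda>m::complex^'n^'n. m $ p $ q)"
  unfolding clinear_functional_def by simp

lemma deriv_comm_tr:
  assumes "is_derivation D" "z ** w = w ** z"
  shows "trace (w ** D z) = 0"
proof -
  obtain a where a: "\<And>z. D z = a ** z - z ** a" using deriv_inner[OF assms(1)] by blast
  have "trace (w ** (a ** z)) = trace (z ** (w ** a))"
    using trace_mul_sym[of "w ** a" z] by (simp add: matrix_mul_assoc)
  also have "\<dots> = trace ((w ** z) ** a)" by (simp add: matrix_mul_assoc assms(2))
  finally show ?thesis by (simp add: a matrix_diff_ldistrib trace_sub matrix_mul_assoc)
qed

lemma w2l_L:
  assumes "weak_2_local_derivation \<Delta>" "(x - x') ** w = w ** (x - x')"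
  shows "trace (w ** \<Delta> x) = trace (w ** \<Delta> x')"
proof -
  obtain D where D: "is_derivation D" "trace (w ** \<Delta> x) = trace (w ** D x)"
      "trace (w ** \<Delta> x') = trace (w ** D x')"
    using assms(1) functional_trace[of w] unfolding weak_2_local_derivation_def by blast
  have lin: "clinear_op D" using D(1) by (simp add: is_derivation_def)
  have "trace (w ** D x) - trace (w ** D x') = trace (w ** D (x - x'))"
    by (simp add: clinear_op_diff[OF lin] matrix_diff_ldistrib trace_sub)
  also have "\<dots> = 0" by (rule deriv_comm_tr[OF D(1) assms(2)])
  finally show ?thesis using D by simp
qed

lemma w2l_H:
  assumes "weak_2_local_derivation \<Delta>"
  shows "\<Delta> (cmat_scale c x) = cmat_scale c (\<Delta> x)"
proof -
  have "\<Delta> (cmat_scale c x) $ p $ q = c * \<Delta> x $ p $ q" for p q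
  proof -
    obtain D where D: "is_derivation D" "\<Delta> x $ p $ q = D x $ p $ q"
      "\<Delta> (cmat_scale c x) $ p $ q = D (cmat_scale c x) $ p $ q"
      using assms(1) functional_entry[of p q] unfolding weak_2_local_derivation_def by blast
    thus ?thesis by (simp add: is_derivation_def clinear_op_def)
  qed
  thus ?thesis by (simp add: vec_eq_iff)
qed

lemma w2l_0:
  assumes "weak_2_local_derivation \<Delta>"
  shows "\<Delta> 0 = 0"
proof -
  have z: "cmat_scale 0 (m::complex^'n^'n) = 0" for m by (simp add: vec_eq_iff)
  have "\<Delta> 0 = \<Delta> (cmat_scale 0 0)" by (simp add: z)
  also have "\<dots> = cmat_scale 0 (\<Delta> 0)" by (rule w2l_H[OF assms])
  finally show ?thesis by (simp add: z)
qed

lemma trace_lin_w: "trace ((w + cmat_scale t e) ** M) = trace (w ** M) + t * trace (e ** (M::complex^'n^'n))"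
  by (simp add: matrix_add_rdistrib' trace_add mult_scale_left trace_scale)

lemma w2l_star:
  assumes "weak_2_local_derivation \<Delta>"
  shows "trace (w ** \<Delta> (x + cmat_scale t e)) = trace (w ** \<Delta> x) + t * (trace (e ** \<Delta> x) - trace (e ** \<Delta> (x + w)))"
proof -
  define v where "v = w + cmat_scale t e"
  have nv: "x - (x + cmat_scale t e + w) = - v" by (simp add: v_def algebra_simps)
  have "(x - (x + cmat_scale t e + w)) ** v = v ** (x - (x + cmat_scale t e + w))"
    unfolding nv by (simp add: matrix_neg_left matrix_neg_right)
  hence 1: "trace (v ** \<Delta> x) = trace (v ** \<Delta> (x + cmat_scale t e + w))"
    by (rule w2l_L[OF assms])
  have 2: "trace (w ** \<Delta> (x + cmat_scale t e + w)) = trace (w ** \<Delta> (x + cmat_scale t e))"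
    by (rule w2l_L[OF assms]) simp
  have 3: "trace (e ** \<Delta> (x + cmat_scale t e + w)) = trace (e ** \<Delta> (x + w))"
    by (rule w2l_L[OF assms]) (simp add: mult_scale_left mult_scale_right)
  from 1 2 3 show ?thesis unfolding v_def trace_lin_w by (simp add: algebra_simps)
qed

lemma w2l_add_g:
  assumes "weak_2_local_derivation \<Delta>"
  shows "trace (w ** \<Delta> (x + y)) = trace (w ** \<Delta> x) + trace (w ** \<Delta> y)"
proof -
  define g where "g z = trace (w ** \<Delta> z)" for z
  have hom: "g (cmat_scale c z) = c * g z" for c z
    by (simp add: g_def w2l_H[OF assms] mult_scale_right trace_scale)
  define K1 where "K1 = trace (y ** \<Delta> x) - trace (y ** \<Delta> (x + w))"
  define K2 where "K2 = trace (x ** \<Delta> y) - trace (x ** \<Delta> (y + w))"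
  have s1: "g (x + cmat_scale t y) = g x + t * K1" for t
    unfolding g_def K1_def by (rule w2l_star[OF assms])
  have s2: "g (x + cmat_scale t y) = t * g y + K2" if "t \<noteq> 0" for t
  proof -
    have "x + cmat_scale t y = cmat_scale t (y + cmat_scale (1/t) x)"
      using that by (simp add: vec_eq_iff field_simps)
    hence "g (x + cmat_scale t y) = t * g (y + cmat_scale (1/t) x)" by (simp add: hom)
    also have "\<dots> = t * (g y + (1/t) * K2)"
      unfolding g_def K2_def by (subst w2l_star[OF assms]) simp
    finally have "g (x + cmat_scale t y) = t * (g y + (1/t) * K2)" .
    thus ?thesis using that by (simp add: distrib_left)
  qed
  have a: "g x + K1 = g y + K2" using s1[of 1] s2[of 1] by simp
  have b: "g x + 2 * K1 = 2 * g y + K2" using s1[of 2] s2[of 2] by simp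
  have "K1 = (g x + 2 * K1) - (g x + K1)" by (simp add: algebra_simps)
  also have "\<dots> = (2 * g y + K2) - (g y + K2)" using a b by simp
  also have "\<dots> = g y" by (simp add: algebra_simps)
  finally have "K1 = g y" .
  moreover have "x + cmat_scale 1 y = x + y" by (simp add: vec_eq_iff)
  ultimately show ?thesis using s1[of 1] unfolding g_def by simp
qed

lemma w2l_linear:
  assumes "weak_2_local_derivation \<Delta>"
  shows "clinear_op \<Delta>"
proof -
  have "\<Delta> (x + y) $ p $ q = (\<Delta> x + \<Delta> y) $ p $ q" for x y p q
    using w2l_add_g[OF assms, of "E q p" x y] by (simp add: trace_E_mult)
  thus ?thesis unfolding clinear_op_def using w2l_H[OF assms] by (simp add: vec_eq_iff)
qed




lemma inner_from_units:
  assumes lin: "clinear_op T" and unit: "\<And>i j. T (E i j) = a ** E i j - E i j ** a"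
  shows "T z = a ** z - z ** a"
proof -
  have "T z = (\<Sum>i\<in>UNIV. \<Sum>j\<in>UNIV. cmat_scale (z$i$j) (a ** E i j - E i j ** a))"
    by (subst clinear_linear_expand[OF lin]) (simp add: unit)
  also have "\<dots> = (\<Sum>i\<in>UNIV. \<Sum>j\<in>UNIV. a ** cmat_scale (z$i$j) (E i j)) - (\<Sum>i\<in>UNIV. \<Sum>j\<in>UNIV. cmat_scale (z$i$j) (E i j) ** a)"
    by (simp add: cmat_scale_diff mult_scale_left mult_scale_right sum_subtractf)
  also have "\<dots> = a ** z - z ** a"
  proof -
    have "a ** z = a ** (\<Sum>i\<in>UNIV. \<Sum>j\<in>UNIV. cmat_scale (z$i$j) (E i j))"
      by (rule arg_cong[where f="\<lambda>m. a ** m"], rule matrix_decomp)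
    moreover have "z ** a = (\<Sum>i\<in>UNIV. \<Sum>j\<in>UNIV. cmat_scale (z$i$j) (E i j)) ** a"
      by (rule arg_cong[where f="\<lambda>m. m ** a"], rule matrix_decomp)
    ultimately show ?thesis by (simp only: sum_mult_left sum_mult_right)
  qed
  finally show ?thesis .
qed

lemma lin_add: "clinear_op T \<Longrightarrow> T (a + b) = T a + T b"
  by (simp add: clinear_op_def)

locale commzero =
  fixes \<Delta> :: "complex^'n^'n \<Rightarrow> complex^'n^'n"
  assumes lin: "clinear_op \<Delta>"
    and L0: "\<And>z w. z ** w = w ** z \<Longrightarrow> trace (w ** \<Delta> z) = 0"
begin

lemma F1: "E i j ** E k l = E k l ** E i j \<Longrightarrow> \<Delta> (E i j) $ l $ k = 0"
  using L0[of "E i j" "E k l"] by (simp add: trace_E_mult)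

lemma F1': "j \<noteq> k \<Longrightarrow> l \<noteq> i \<Longrightarrow> \<Delta> (E i j) $ l $ k = 0"
  by (rule F1) (simp add: E_mult)

lemma F1d: "\<Delta> (E i j) $ j $ i = 0"
  by (rule F1) simp

lemma F2: "\<Delta> (E i j) $ l $ k = - \<Delta> (E k l) $ j $ i"
proof -
  have "trace ((E i j + E k l) ** \<Delta> (E i j + E k l)) = 0" by (rule L0) simp
  thus ?thesis
    by (simp add: lin_add[OF lin] matrix_add_ldistrib matrix_add_rdistrib' trace_add trace_E_mult F1d
        eq_neg_iff_add_eq_0 add.commute)
qed

lemma F3:
  assumes "i \<noteq> l"
  shows "\<Delta> (E i j) $ l $ j = \<Delta> (E i j') $ l $ j'"
proof (cases "j = j'")
  case True thus ?thesis by simp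
next
  case False
  have "(E i j + E i j') ** (E j l - E j' l) = (E j l - E j' l) ** (E i j + E i j')"
    using False assms by (simp add: matrix_add_ldistrib matrix_add_rdistrib' matrix_diff_ldistrib matrix_diff_rdistrib E_mult)
  hence "trace ((E j l - E j' l) ** \<Delta> (E i j + E i j')) = 0" by (rule L0)
  thus ?thesis using False assms
    by (simp add: lin_add[OF lin] matrix_diff_rdistrib trace_sub matrix_add_ldistrib trace_add trace_E_mult F1')
qed

lemma F4:
  assumes "i \<noteq> j" "j \<noteq> k" "k \<noteq> i"
  shows "\<Delta> (E i j) $ i $ j + \<Delta> (E j k) $ j $ k + \<Delta> (E k i) $ k $ i = 0"
proof -
  have "(E i j + E j k + E k i) ** (E j i + E k j + E i k) = (E j i + E k j + E i k) ** (E i j + E j k + E k i)"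
    using assms by (simp add: matrix_add_ldistrib matrix_add_rdistrib' E_mult add_ac)
  hence "trace ((E j i + E k j + E i k) ** \<Delta> (E i j + E j k + E k i)) = 0" by (rule L0)
  thus ?thesis using assms
    by (simp add: lin_add[OF lin] matrix_add_rdistrib' trace_add matrix_add_ldistrib trace_E_mult F1' add_ac)
qed

definition z0 :: 'n where "z0 = undefined"

definition amat :: "complex^'n^'n" where
  "amat = (\<chi> p i. if i = p then \<Delta> (E i z0) $ i $ z0 else \<Delta> (E i i) $ p $ i)"

lemma unit: "\<Delta> (E i j) = amat ** E i j - E i j ** amat"
proof -
  have "\<Delta> (E i j) $ p $ q = (amat ** E i j - E i j ** amat) $ p $ q" for p q
  proof -
    have r: "(amat ** E i j - E i j ** amat) $ p $ q =
        (if q = j then amat $ p $ i else 0) - (if p = i then amat $ j $ q else 0)"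
      by (simp add: E_left_nth E_right_nth)
    show ?thesis
    proof (cases "q = j")
      case qj: True
      show ?thesis
      proof (cases "p = i")
        case pi: True
        show ?thesis
        proof (cases "i = j")
          case True thus ?thesis using qj pi r by (simp add: F1d)
        next
          case ij: False
          show ?thesis
          proof (cases "i = z0")
            case True thus ?thesis using qj pi r ij F2[of z0 j z0 j] by (simp add: amat_def F1d)
          next
            case iz: False
            show ?thesis
            proof (cases "j = z0")
              case True thus ?thesis using qj pi r ij by (simp add: amat_def F1d)
            next
              case False
              hence f4: "\<Delta> (E i j) $ i $ j + \<Delta> (E j z0) $ j $ z0 + \<Delta> (E z0 i) $ z0 $ i = 0"
                using ij iz by (intro F4) auto
              have "\<Delta> (E i j) $ i $ j = (\<Delta> (E i j) $ i $ j + \<Delta> (E j z0) $ j $ z0 + \<Delta> (E z0 i) $ z0 $ i)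
                  - \<Delta> (E j z0) $ j $ z0 - \<Delta> (E z0 i) $ z0 $ i" by simp
              also have "\<dots> = 0 - \<Delta> (E j z0) $ j $ z0 - \<Delta> (E z0 i) $ z0 $ i"
                by (simp only: f4)
              also have "\<dots> = \<Delta> (E i z0) $ i $ z0 - \<Delta> (E j z0) $ j $ z0"
                by (simp add: F2[of z0 i z0 i])
              finally have X: "\<Delta> (E i j) $ i $ j = \<Delta> (E i z0) $ i $ z0 - \<Delta> (E j z0) $ j $ z0" .
              have "(amat ** E i j - E i j ** amat) $ p $ q = \<Delta> (E i z0) $ i $ z0 - \<Delta> (E j z0) $ j $ z0"
                using qj pi r by (simp add: amat_def)
              thus ?thesis using X qj pi by simp
            qed
          qed
        qed
      next
        case pi: False
        thus ?thesis using qj r F3[of i p j i] by (simp add: amat_def)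
      qed
    next
      case qj: False
      show ?thesis
      proof (cases "p = i")
        case pi: True
        thus ?thesis using qj r F2[of i j i q] F3[of q j i q] by (simp add: amat_def)
      next
        case False
        thus ?thesis using qj r by (simp add: F1')
      qed
    qed
  qed
  thus ?thesis by (simp add: vec_eq_iff)
qed

lemma inner: "\<Delta> z = amat ** z - z ** amat"
  by (rule inner_from_units[OF lin unit])

lemma is_der: "is_derivation \<Delta>"
  unfolding is_derivation_def
  by (simp add: lin inner matrix_diff_ldistrib matrix_diff_rdistrib matrix_mul_assoc)

end

theorem proposition2p11:
  fixes \<Delta> :: "complex^'n^'n \<Rightarrow> complex^'n^'n"
  assumes "weak_2_local_derivation \<Delta>"
    and "\<forall>a. cmat_adj (\<Delta> (cmat_adj a)) = \<Delta> a"
  shows "clinear_op \<Delta> \<and> is_derivation \<Delta>"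
proof -
  have lin: "clinear_op \<Delta>" by (rule w2l_linear[OF assms(1)])
  have "commzero \<Delta>"
  proof
    show "clinear_op \<Delta>" by (rule lin)
    fix z w :: "complex^'n^'n" assume "z ** w = w ** z"
    hence "trace (w ** \<Delta> z) = trace (w ** \<Delta> 0)" by (intro w2l_L[OF assms(1)]) simp
    thus "trace (w ** \<Delta> z) = 0" by (simp add: w2l_0[OF assms(1)] trace_def)
  qed
  thus ?thesis using lin commzero.is_der by blast
qed


end
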